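(* Let $G$ and $H$ be finite nilpotent groups each of which has at least two non-abelian Sylow subgroups. If $\Gamma_G\cong\Gamma_H$, then $|G|=|H|$.
   Context: For a non-abelian group $G$ with center $Z(G)$, the non-commuting graph $\Gamma_G$ is the simple graph with vertex set $G\setminus Z(G)$ in which two distinct vertices $x,y$ are adjacent if and only if $xy\neq yx$. *)

theory Defs
  imports "HOL-Algebra.Algebra"
begin

definition group_center :: "('a, 'b) monoid_scheme \<Rightarrow> 'a set" where
  "group_center G = {z \<in> carrier G. \<forall>x \<in> carrier G. z \<otimes>\<^bsub>G\<^esub> x = x \<otimes>\<^bsub>G\<^esub> z}"

fun lower_central :: "('a, 'b) monoid_scheme \<Rightarrow> nat \<Rightarrow> 'a set" where
  "lower_central G 0 = carrier G"
| "lower_central G (Suc n) = generate G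
     {h \<otimes>\<^bsub>G\<^esub> g \<otimes>\<^bsub>G\<^esub> inv\<^bsub>G\<^esub> h \<otimes>\<^bsub>G\<^esub> inv\<^bsub>G\<^esub> g | h g. h \<in> lower_central G n \<and> g \<in> carrier G}"

definition nilpotent_group :: "('a, 'b) monoid_scheme \<Rightarrow> bool" where
  "nilpotent_group G \<longleftrightarrow> group G \<and> (\<exists>n. lower_central G n = {\<one>\<^bsub>G\<^esub>})"

definition sylow_subgroup :: "('a, 'b) monoid_scheme \<Rightarrow> nat \<Rightarrow> 'a set \<Rightarrow> bool" where
  "sylow_subgroup G p P \<longleftrightarrow> Factorial_Ring.prime p \<and> subgroup P G \<and> (\<exists>a. card P = p ^ a)
     \<and> \<not> p dvd (order G div card P)"

definition nonabelian_subset :: "('a, 'b) monoid_scheme \<Rightarrow> 'a set \<Rightarrow> bool" where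
  "nonabelian_subset G P \<longleftrightarrow> (\<exists>x \<in> P. \<exists>y \<in> P. x \<otimes>\<^bsub>G\<^esub> y \<noteq> y \<otimes>\<^bsub>G\<^esub> x)"

definition two_nonabelian_sylows :: "('a, 'b) monoid_scheme \<Rightarrow> bool" where
  "two_nonabelian_sylows G \<longleftrightarrow> (\<exists>p q P Q. sylow_subgroup G p P \<and> sylow_subgroup G q Q \<and> P \<noteq> Q
      \<and> nonabelian_subset G P \<and> nonabelian_subset G Q)"

text \<open>Isomorphism of non-commuting graphs: vertex sets G - Z(G), H - Z(H);
  x, y adjacent iff xy \<noteq> yx (this already forces x \<noteq> y).\<close>
definition noncomm_graph_iso :: "('a, 'b) monoid_scheme \<Rightarrow> ('c, 'd) monoid_scheme \<Rightarrow> bool" where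
  "noncomm_graph_iso G H \<longleftrightarrow> (\<exists>f. bij_betw f (carrier G - group_center G) (carrier H - group_center H)
     \<and> (\<forall>x \<in> carrier G - group_center G. \<forall>y \<in> carrier G - group_center G.
          (x \<otimes>\<^bsub>G\<^esub> y \<noteq> y \<otimes>\<^bsub>G\<^esub> x) \<longleftrightarrow> (f x \<otimes>\<^bsub>H\<^esub> f y \<noteq> f y \<otimes>\<^bsub>H\<^esub> f x)))"

end

theory Submission imports Defs begin

context group begin
lemma cancel_l [simp]: "x \<in> carrier G \<Longrightarrow> y \<in> carrier G \<Longrightarrow> inv x \<otimes> (x \<otimes> y) = y"
  by (simp add: m_assoc[symmetric])
lemma cancel_r [simp]: "x \<in> carrier G \<Longrightarrow> y \<in> carrier G \<Longrightarrow> x \<otimes> (inv x \<otimes> y) = y"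
  by (simp add: m_assoc[symmetric])

lemma commutator_conj:
  assumes "g \<in> carrier G" "h \<in> carrier G" "k \<in> carrier G"
  shows "g \<otimes> (h \<otimes> k \<otimes> inv h \<otimes> inv k) \<otimes> inv g =
    (g \<otimes> h \<otimes> inv g) \<otimes> (g \<otimes> k \<otimes> inv g) \<otimes> inv (g \<otimes> h \<otimes> inv g) \<otimes> inv (g \<otimes> k \<otimes> inv g)"
  using assms by (simp add: m_assoc inv_mult_group)

lemma lc_normal: "lower_central G n \<lhd> G"
proof (induction n)
  case 0 show ?case by (auto intro!: normal_invI subgroup_self)
next
  case (Suc n)
  have sub: "lower_central G n \<subseteq> carrier G" using Suc normal_imp_subgroup subgroup.subset by blast
  show ?case unfolding lower_central.simps
  proof (rule normal_generateI)
    show "{h \<otimes> g \<otimes> inv h \<otimes> inv g |h g. h \<in> lower_central G n \<and> g \<in> carrier G} \<subseteq> carrier G"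
      using sub by auto
  next
    fix c x assume c: "c \<in> {h \<otimes> g \<otimes> inv h \<otimes> inv g |h g. h \<in> lower_central G n \<and> g \<in> carrier G}"
      and x: "x \<in> carrier G"
    then obtain h g where hg: "c = h \<otimes> g \<otimes> inv h \<otimes> inv g" "h \<in> lower_central G n" "g \<in> carrier G" by auto
    have hc: "h \<in> carrier G" using hg sub by auto
    have "x \<otimes> h \<otimes> inv x \<in> lower_central G n" using Suc normal_invE(2) hg x by blast
    moreover have "x \<otimes> g \<otimes> inv x \<in> carrier G" using x hg by simp
    ultimately show "x \<otimes> c \<otimes> inv x \<in> {h \<otimes> g \<otimes> inv h \<otimes> inv g |h g. h \<in> lower_central G n \<and> g \<in> carrier G}"
      using commutator_conj[OF x hc hg(3)] hg(1) by auto
  qed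
qed

lemma lc_sub: "lower_central G n \<subseteq> carrier G"
  using lc_normal normal_imp_subgroup subgroup.subset by blast

lemma lc_comm:
  assumes "h \<in> lower_central G n" "g \<in> carrier G"
  shows "h \<otimes> g \<otimes> inv h \<otimes> inv g \<in> lower_central G (Suc n)"
  using assms by (auto intro: generate.incl)

lemma lc_growth:
  assumes "lower_central G N = {\<one>}" "subgroup K G" "K \<noteq> carrier G"
  shows "\<exists>g \<in> carrier G - K. \<forall>k \<in> K. g \<otimes> k \<otimes> inv g \<in> K"
proof -
  have ex: "\<exists>j. lower_central G j \<subseteq> K" by (rule exI[of _ N]) (use assms subgroup.one_closed in auto)
  define j where "j = (LEAST j. lower_central G j \<subseteq> K)"
  have j: "lower_central G j \<subseteq> K" using LeastI_ex[OF ex] j_def by simp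
  have j0: "j \<noteq> 0" proof assume "j = 0" then have "carrier G \<subseteq> K" using j by simp then show False using assms subgroup.subset by blast qed
  then obtain i where i: "j = Suc i" using not0_implies_Suc by blast
  have "\<not> lower_central G i \<subseteq> K" proof assume "lower_central G i \<subseteq> K" then have "j \<le> i" unfolding j_def by (rule Least_le) then show False using i by simp qed
  then obtain g where g: "g \<in> lower_central G i" "g \<notin> K" by auto
  have gc: "g \<in> carrier G" using g lc_sub by auto
  have "\<forall>k \<in> K. g \<otimes> k \<otimes> inv g \<in> K"
  proof
    fix k assume k: "k \<in> K"
    have kc: "k \<in> carrier G" using k subgroup.subset[OF assms(2)] by blast
    have ji: "lower_central G (Suc i) \<subseteq> K" using j unfolding i .
    have "g \<otimes> k \<otimes> inv g \<otimes> inv k \<in> K" using lc_comm[OF g(1) kc] ji by (rule subsetD[rotated])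
    then have "g \<otimes> k \<otimes> inv g \<otimes> inv k \<otimes> k \<in> K" using k subgroup.m_closed[OF assms(2)] by blast
    then show "g \<otimes> k \<otimes> inv g \<in> K" using gc kc by (simp add: m_assoc)
  qed
  then show ?thesis using g gc by blast
qed


lemma comm_from_commutator:
  assumes "a \<in> carrier G" "b \<in> carrier G" "a \<otimes> b \<otimes> inv a \<otimes> inv b = \<one>"
  shows "a \<otimes> b = b \<otimes> a"
proof -
  have "a \<otimes> b \<otimes> inv a \<otimes> inv b \<otimes> b \<otimes> a = b \<otimes> a" using assms by simp
  then show ?thesis using assms by (simp add: m_assoc)
qed

lemma pow_comm:
  assumes "a \<in> carrier G" "b \<in> carrier G" "a \<otimes> b = b \<otimes> a"
  shows "a [^] (k::nat) \<otimes> b = b \<otimes> a [^] k"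
proof (induction k)
  case 0 then show ?case using assms by simp
next
  case (Suc k)
  have "a [^] Suc k \<otimes> b = a [^] k \<otimes> (a \<otimes> b)" using assms by (simp add: m_assoc)
  also have "\<dots> = (a [^] k \<otimes> b) \<otimes> a" using assms by (simp add: m_assoc)
  also have "\<dots> = b \<otimes> a [^] Suc k" using Suc assms by (simp add: m_assoc)
  finally show ?case .
qed

lemma central_commutator_trivial:
  assumes x: "x \<in> carrier G" and y: "y \<in> carrier G"
    and cx: "(x \<otimes> y \<otimes> inv x \<otimes> inv y) \<otimes> x = x \<otimes> (x \<otimes> y \<otimes> inv x \<otimes> inv y)"
    and cy: "(x \<otimes> y \<otimes> inv x \<otimes> inv y) \<otimes> y = y \<otimes> (x \<otimes> y \<otimes> inv x \<otimes> inv y)"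
    and xa: "x [^] (a::nat) = \<one>" and yb: "y [^] (b::nat) = \<one>" and cop: "coprime a b"
  shows "x \<otimes> y \<otimes> inv x \<otimes> inv y = \<one>"
proof -
  define c where "c = x \<otimes> y \<otimes> inv x \<otimes> inv y"
  have cc: "c \<in> carrier G" using x y c_def by simp
  have cx': "c \<otimes> x = x \<otimes> c" and cy': "c \<otimes> y = y \<otimes> c" using cx cy c_def by auto
  have xy: "x \<otimes> y = c \<otimes> y \<otimes> x" using x y unfolding c_def by (simp add: m_assoc)
  have cl1: "x [^] k \<otimes> y = c [^] k \<otimes> y \<otimes> x [^] k" for k :: nat
  proof (induction k)
    case 0 then show ?case using y by simp
  next
    case (Suc k)
    have ck: "x [^] k \<otimes> c = c \<otimes> x [^] k" using pow_comm[OF x cc] cx' by simp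
    have "x [^] Suc k \<otimes> y = x [^] k \<otimes> (x \<otimes> y)" using x y by (simp add: m_assoc)
    also have "\<dots> = (x [^] k \<otimes> c) \<otimes> y \<otimes> x" using x y cc by (simp add: xy m_assoc)
    also have "\<dots> = c \<otimes> (x [^] k \<otimes> y) \<otimes> x" using x y cc by (simp add: ck m_assoc)
    also have "\<dots> = c \<otimes> (c [^] k \<otimes> y \<otimes> x [^] k) \<otimes> x" using Suc by simp
    also have "\<dots> = (c \<otimes> c [^] k) \<otimes> y \<otimes> (x [^] k \<otimes> x)" using x y cc by (simp add: m_assoc)
    also have "\<dots> = c [^] Suc k \<otimes> y \<otimes> x [^] Suc k" using x cc nat_pow_Suc2[of c k] by simp
    
    finally show ?case .
  qed
  have cl2: "x \<otimes> y [^] k = c [^] k \<otimes> y [^] k \<otimes> x" for k :: nat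
  proof (induction k)
    case 0 then show ?case using x by simp
  next
    case (Suc k)
    have ck: "y [^] k \<otimes> c = c \<otimes> y [^] k" using pow_comm[OF y cc] cy' by simp
    have "x \<otimes> y [^] Suc k = (x \<otimes> y [^] k) \<otimes> y" using x y by (simp add: m_assoc)
    also have "\<dots> = c [^] k \<otimes> y [^] k \<otimes> (x \<otimes> y)" using x y cc Suc by (simp add: m_assoc)
    also have "\<dots> = c [^] k \<otimes> (y [^] k \<otimes> c) \<otimes> y \<otimes> x" using x y cc by (simp add: xy m_assoc)
    also have "\<dots> = c [^] Suc k \<otimes> y [^] Suc k \<otimes> x" using x y cc by (simp add: ck m_assoc)
    finally show ?case .
  qed
  have "y = c [^] a \<otimes> y" using cl1[of a] xa x y cc by simp
  then have ca: "c [^] a = \<one>" using y cc by simp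
  have "x = c [^] b \<otimes> x" using cl2[of b] yb x y cc by simp
  then have cb: "c [^] b = \<one>" using x cc by simp
  have "ord c dvd a" "ord c dvd b" using ca cb pow_eq_id cc by auto
  then have "ord c dvd 1" using cop by (metis coprime_common_divisor)
  then have "ord c = 1" by simp
  then show ?thesis using ord_eq_1 cc c_def by simp
qed

lemma coprime_elements_commute:
  assumes nil: "lower_central G N = {\<one>\<^bsub>G\<^esub>}"
    and x: "x \<in> carrier G" and y: "y \<in> carrier G"
    and xa: "x [^]\<^bsub>G\<^esub> (a::nat) = \<one>\<^bsub>G\<^esub>" and yb: "y [^]\<^bsub>G\<^esub> (b::nat) = \<one>\<^bsub>G\<^esub>" and cop: "coprime a b"
  shows "x \<otimes>\<^bsub>G\<^esub> y = y \<otimes>\<^bsub>G\<^esub> x"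
proof -
  define c where "c = x \<otimes> y \<otimes> inv x \<otimes> inv y"
  have cc: "c \<in> carrier G" using x y c_def by simp
  have cin: "c \<in> lower_central G i" for i
  proof (induction i)
    case 0 then show ?case using cc by simp
  next
    case (Suc i)
    define K where "K = lower_central G (Suc i)"
    have KN: "K \<lhd> G" unfolding K_def by (rule lc_normal)
    have KS: "subgroup K G" using KN normal_imp_subgroup by blast
    have Qg: "group (G Mod K)" using KN normal.factorgroup_is_group by blast
    have hh: "(\<lambda>a. K #> a) \<in> hom G (G Mod K)" using KN normal.r_coset_hom_Mod by blast
    have gh: "group_hom G (G Mod K) (\<lambda>a. K #> a)"
      using Qg hh by (simp add: group_hom_def group_hom_axioms_def is_group)
    have triv: "K #> u = \<one>\<^bsub>G Mod K\<^esub>" if "u \<in> K" for u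
    proof -
      have "u \<in> carrier G" using that subgroup.subset[OF KS] by blast
      then show ?thesis using coset_join2[OF _ KS that] by simp
    qed
    have c1: "c \<otimes> x \<otimes> inv c \<otimes> inv x \<in> K" using lc_comm[OF Suc x] unfolding K_def .
    have c2: "c \<otimes> y \<otimes> inv c \<otimes> inv y \<in> K" using lc_comm[OF Suc y] unfolding K_def .
    let ?X = "K #> x" and ?Y = "K #> y" and ?C = "K #> c"
    have XC: "?X \<in> carrier (G Mod K)" "?Y \<in> carrier (G Mod K)" "?C \<in> carrier (G Mod K)"
      using hh x y cc by (auto simp: hom_def Pi_def)
    have hm: "K #> (u \<otimes> v) = (K #> u) \<otimes>\<^bsub>G Mod K\<^esub> (K #> v)" if "u \<in> carrier G" "v \<in> carrier G" for u v
      using hom_mult[OF hh that] .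
    have hi: "K #> (inv u) = inv\<^bsub>G Mod K\<^esub> (K #> u)" if "u \<in> carrier G" for u
      using group_hom.hom_inv[OF gh that] .
    have Cdef: "?C = ?X \<otimes>\<^bsub>G Mod K\<^esub> ?Y \<otimes>\<^bsub>G Mod K\<^esub> inv\<^bsub>G Mod K\<^esub> ?X \<otimes>\<^bsub>G Mod K\<^esub> inv\<^bsub>G Mod K\<^esub> ?Y"
      unfolding c_def using x y by (simp only: hm hi m_closed inv_closed)
    have "?C \<otimes>\<^bsub>G Mod K\<^esub> ?X \<otimes>\<^bsub>G Mod K\<^esub> inv\<^bsub>G Mod K\<^esub> ?C \<otimes>\<^bsub>G Mod K\<^esub> inv\<^bsub>G Mod K\<^esub> ?X = \<one>\<^bsub>G Mod K\<^esub>"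
      using triv[OF c1] x cc by (simp only: hm hi m_closed inv_closed)
    then have CX: "?C \<otimes>\<^bsub>G Mod K\<^esub> ?X = ?X \<otimes>\<^bsub>G Mod K\<^esub> ?C" using group.comm_from_commutator[OF Qg] XC by blast
    have "?C \<otimes>\<^bsub>G Mod K\<^esub> ?Y \<otimes>\<^bsub>G Mod K\<^esub> inv\<^bsub>G Mod K\<^esub> ?C \<otimes>\<^bsub>G Mod K\<^esub> inv\<^bsub>G Mod K\<^esub> ?Y = \<one>\<^bsub>G Mod K\<^esub>"
      using triv[OF c2] y cc by (simp only: hm hi m_closed inv_closed)
    then have CY: "?C \<otimes>\<^bsub>G Mod K\<^esub> ?Y = ?Y \<otimes>\<^bsub>G Mod K\<^esub> ?C" using group.comm_from_commutator[OF Qg] XC by blast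
    have Xa: "?X [^]\<^bsub>G Mod K\<^esub> a = \<one>\<^bsub>G Mod K\<^esub>"
      using group_hom.hom_nat_pow[OF gh x, of a] xa group_hom.hom_one[OF gh] by metis
    have Yb: "?Y [^]\<^bsub>G Mod K\<^esub> b = \<one>\<^bsub>G Mod K\<^esub>"
      using group_hom.hom_nat_pow[OF gh y, of b] yb group_hom.hom_one[OF gh] by metis
    have "?X \<otimes>\<^bsub>G Mod K\<^esub> ?Y \<otimes>\<^bsub>G Mod K\<^esub> inv\<^bsub>G Mod K\<^esub> ?X \<otimes>\<^bsub>G Mod K\<^esub> inv\<^bsub>G Mod K\<^esub> ?Y = \<one>\<^bsub>G Mod K\<^esub>"
      using group.central_commutator_trivial[OF Qg XC(1) XC(2) CX[unfolded Cdef] CY[unfolded Cdef] Xa Yb cop] .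
    then have "K #> c = K" using Cdef by simp
    then have "c \<in> K" using rcos_self[OF cc KS] by simp
    then show ?case unfolding K_def .
  qed
  have "c = \<one>" using cin[of N] nil by blast
  then show ?thesis by (intro comm_from_commutator[OF x y]) (simp add: c_def)
qed


lemma conj_pow:
  assumes "g \<in> carrier G" "h \<in> carrier G"
  shows "(g \<otimes> h \<otimes> inv g) [^] (n::nat) = g \<otimes> h [^] n \<otimes> inv g"
proof (induction n)
  case 0 then show ?case using assms by simp
next
  case (Suc n)
  then show ?case using assms by (simp add: m_assoc)
qed

lemma pelem_in_normal:
  assumes NS: "subgroup N G" and PN: "P \<subseteq> N"
    and Pn: "normal P (G\<lparr>carrier := N\<rparr>)"
    and pr: "Factorial_Ring.prime (p::nat)" and ndvd: "\<not> p dvd (order G div card P)" and fin: "finite (carrier G)"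
    and yN: "y \<in> N" and yp: "y [^] (p ^ k) = \<one>"
  shows "y \<in> P"
proof (rule ccontr)
  assume ynP: "y \<notin> P"
  define N' where "N' = G\<lparr>carrier := N\<rparr>"
  have gN': "group N'" unfolding N'_def using NS subgroup_imp_group by blast
  have PS': "subgroup P N'" using Pn normal_imp_subgroup unfolding N'_def by blast
  have Qg: "group (N' Mod P)" using Pn normal.factorgroup_is_group unfolding N'_def by blast
  have hh: "(\<lambda>a. P #>\<^bsub>N'\<^esub> a) \<in> hom N' (N' Mod P)" using Pn normal.r_coset_hom_Mod unfolding N'_def by blast
  have gh: "group_hom N' (N' Mod P) (\<lambda>a. P #>\<^bsub>N'\<^esub> a)"
    using Qg hh gN' by (simp add: group_hom_def group_hom_axioms_def)
  have yN': "y \<in> carrier N'" using yN N'_def by simp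
  let ?Y = "P #>\<^bsub>N'\<^esub> y"
  have Yc: "?Y \<in> carrier (N' Mod P)" using hh yN' by (auto simp: hom_def Pi_def)
  have "y [^]\<^bsub>N'\<^esub> (p ^ k) = \<one>\<^bsub>N'\<^esub>" using yp nat_pow_consistent[of y "p^k" N] N'_def by simp
  then have Yp: "?Y [^]\<^bsub>N' Mod P\<^esub> (p ^ k) = \<one>\<^bsub>N' Mod P\<^esub>"
    using group_hom.hom_nat_pow[OF gh yN', of "p^k"] group_hom.hom_one[OF gh] by metis
  have Yne: "?Y \<noteq> \<one>\<^bsub>N' Mod P\<^esub>"
  proof
    assume "?Y = \<one>\<^bsub>N' Mod P\<^esub>"
    then have "?Y = P" by simp
    then show False using group.rcos_self[OF gN' yN' PS'] ynP by simp
  qed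
  have "group.ord (N' Mod P) ?Y dvd p ^ k" using group.pow_eq_id[OF Qg Yc] Yp by simp
  then obtain j where j: "j \<le> k" "group.ord (N' Mod P) ?Y = p ^ j" using divides_primepow_nat[OF pr] by blast
  have "j \<noteq> 0" using j group.ord_eq_1[OF Qg Yc] Yne by auto
  then have "p dvd group.ord (N' Mod P) ?Y" using j by simp
  also have "\<dots> dvd order (N' Mod P)" using group.ord_dvd_group_order[OF Qg Yc] .
  finally have p1: "p dvd card (rcosets\<^bsub>N'\<^esub> P)" unfolding order_def FactGroup_def by simp
  have l1: "card (rcosets\<^bsub>N'\<^esub> P) * card P = card N"
    using group.lagrange[OF gN' PS'] unfolding order_def N'_def by simp
  have l2: "card (rcosets N) * card N = order G" using lagrange[OF NS] .
  have "p * card P dvd order G"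
    using p1 l1 l2 by (metis dvd_mult_right mult_dvd_mono dvd_refl dvd_trans dvd_triv_right)
  moreover have "card P > 0"
    using fin PN subgroup.subset[OF NS] subgroup.one_closed[OF PS'] by (metis card_gt_0_iff empty_iff finite_subset subset_trans)
  ultimately have "p dvd order G div card P"
    by (metis dvd_div_iff_mult mult.commute nat_neq_iff not_less0 dvd_mult_div_cancel dvd_mult_right dvd_div_mult_self)
  then show False using ndvd by simp
qed


lemma subgroup_pow_card:
  assumes "subgroup P G" "finite (carrier G)" "h \<in> P"
  shows "h [^] card P = \<one>"
proof -
  have g: "group (G\<lparr>carrier := P\<rparr>)" using assms subgroup_imp_group by blast
  have "h [^]\<^bsub>G\<lparr>carrier := P\<rparr>\<^esub> order (G\<lparr>carrier := P\<rparr>) = \<one>\<^bsub>G\<lparr>carrier := P\<rparr>\<^esub>"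
    using group.pow_order_eq_1[OF g] assms by simp
  then show ?thesis using nat_pow_consistent[of h "card P" P] by (simp add: order_def)
qed

lemma sylow_normalizer_full:
  assumes nil: "lower_central G M = {\<one>}" and fin: "finite (carrier G)"
    and syl: "sylow_subgroup G p P"
  shows "normalizer G P = carrier G"
proof (rule ccontr)
  assume ne: "normalizer G P \<noteq> carrier G"
  define N where "N = normalizer G P"
  have pr: "Factorial_Ring.prime p" and PS: "subgroup P G" and ndvd: "\<not> p dvd (order G div card P)"
    using syl unfolding sylow_subgroup_def by auto
  obtain a where ca: "card P = p ^ a" using syl unfolding sylow_subgroup_def by auto
  have Psub: "P \<subseteq> carrier G" using PS subgroup.subset by blast
  have NS: "subgroup N G" unfolding N_def using normalizer_imp_subgroup[OF Psub] .
  have Pn: "normal P (G\<lparr>carrier := N\<rparr>)" unfolding N_def using subgroup_in_normalizer[OF PS] .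
  have PN: "P \<subseteq> N"
    using normal_imp_subgroup[OF Pn] subgroup.subset by fastforce
  obtain g where g: "g \<in> carrier G - N" and gN: "\<forall>k\<in>N. g \<otimes> k \<otimes> inv g \<in> N"
    using lc_growth[OF nil NS] ne N_def by blast
  have gc: "g \<in> carrier G" using g by blast
  have conjP: "g \<otimes> h \<otimes> inv g \<in> P" if h: "h \<in> P" for h
  proof -
    have hc: "h \<in> carrier G" using h Psub by blast
    have "(g \<otimes> h \<otimes> inv g) [^] (p ^ a) = \<one>"
      using conj_pow[OF gc hc] subgroup_pow_card[OF PS fin h] ca gc by simp
    then show ?thesis using pelem_in_normal[OF NS PN Pn pr ndvd fin] gN h PN by blast
  qed
  have img: "(\<lambda>h. g \<otimes> h \<otimes> inv g) ` P = P"
  proof (rule card_subset_eq)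
    show "finite P" using fin Psub finite_subset by blast
    show "(\<lambda>h. g \<otimes> h \<otimes> inv g) ` P \<subseteq> P" using conjP by blast
    have "inj_on (\<lambda>h. g \<otimes> h \<otimes> inv g) P"
    proof (rule inj_onI)
      fix u v assume "u \<in> P" "v \<in> P" "g \<otimes> u \<otimes> inv g = g \<otimes> v \<otimes> inv g"
      then show "u = v" using Psub gc by (metis inv_closed m_closed r_cancel l_cancel subsetD)
    qed
    then show "card ((\<lambda>h. g \<otimes> h \<otimes> inv g) ` P) = card P" by (rule card_image)
  qed
  have "g <# P #> inv g = (\<lambda>h. g \<otimes> h \<otimes> inv g) ` P"
    unfolding l_coset_def r_coset_def by auto
  then have "g <# P #> inv g = P" using img by simp
  then have "g \<in> N" unfolding N_def normalizer_def stabilizer_def using gc Psub by simp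
  then show False using g by blast
qed

lemma sylow_pelem:
  assumes nil: "lower_central G M = {\<one>}" and fin: "finite (carrier G)"
    and syl: "sylow_subgroup G p P" and y: "y \<in> carrier G" and yp: "y [^] (p ^ k) = \<one>"
  shows "y \<in> P"
proof -
  have pr: "Factorial_Ring.prime p" and PS: "subgroup P G" and ndvd: "\<not> p dvd (order G div card P)"
    using syl unfolding sylow_subgroup_def by auto
  have Pn: "normal P (G\<lparr>carrier := carrier G\<rparr>)"
    using subgroup_in_normalizer[OF PS] sylow_normalizer_full[OF nil fin syl] by simp
  show ?thesis using pelem_in_normal[OF subgroup_self subgroup.subset[OF PS] Pn pr ndvd fin y yp] .
qed


lemma card_subgroup_dvd: "subgroup P G \<Longrightarrow> card P dvd order G"
  using lagrange by (metis dvd_triv_right)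

lemma decomposition:
  assumes nil: "lower_central G M = {\<one>}" and fin: "finite (carrier G)"
    and two: "two_nonabelian_sylows G"
  shows "\<exists>A B. A \<subseteq> carrier G \<and> B \<subseteq> carrier G \<and> (\<forall>x\<in>A. \<forall>y\<in>B. x \<otimes> y = y \<otimes> x)
     \<and> (\<forall>g\<in>carrier G. \<exists>x\<in>A. \<exists>y\<in>B. g = x \<otimes> y) \<and> nonabelian_subset G A \<and> nonabelian_subset G B"
proof -
  obtain p q P Q where sP: "sylow_subgroup G p P" and sQ: "sylow_subgroup G q Q" and PQ: "P \<noteq> Q"
    and naP: "nonabelian_subset G P" and naQ: "nonabelian_subset G Q"
    using two unfolding two_nonabelian_sylows_def by blast
  have pr: "Factorial_Ring.prime p" and PS: "subgroup P G" and ndvdP: "\<not> p dvd (order G div card P)"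
    using sP unfolding sylow_subgroup_def by auto
  obtain a where ca: "card P = p ^ a" using sP unfolding sylow_subgroup_def by auto
  have qr: "Factorial_Ring.prime q" and QS: "subgroup Q G" and ndvdQ: "\<not> q dvd (order G div card Q)"
    using sQ unfolding sylow_subgroup_def by auto
  obtain b where cb: "card Q = q ^ b" using sQ unfolding sylow_subgroup_def by auto
  have Psub: "P \<subseteq> carrier G" using PS subgroup.subset by blast
  have Qsub: "Q \<subseteq> carrier G" using QS subgroup.subset by blast
  have n0: "order G > 0" using fin one_closed unfolding order_def by (auto simp: card_gt_0_iff)
  have dP: "p ^ a dvd order G" using card_subgroup_dvd[OF PS] ca by simp
  have dQ: "q ^ b dvd order G" using card_subgroup_dvd[OF QS] cb by simp
  have pq: "p \<noteq> q"
  proof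
    assume "p = q"
    have QP: "Q \<subseteq> P"
    proof
      fix h assume h: "h \<in> Q"
      have "h [^] (p ^ b) = \<one>" using subgroup_pow_card[OF QS fin h] cb \<open>p = q\<close> by simp
      then show "h \<in> P" using sylow_pelem[OF nil fin sP] h Qsub by blast
    qed
    have finP: "finite P" using fin Psub finite_subset by blast
    have "q ^ b \<le> p ^ a" using card_mono[OF finP QP] ca cb by simp
    then have ba: "b \<le> a" using \<open>p = q\<close> prime_gt_1_nat[OF pr] power_le_imp_le_exp by blast
    have "a \<le> b"
    proof (rule ccontr)
      assume "\<not> a \<le> b"
      then have "b < a" by simp
      obtain m where m: "order G = p ^ a * m" using dP by blast
      have e: "order G = p ^ b * (p ^ (a - b) * m)"
        using m \<open>b < a\<close> by (simp add: mult.assoc[symmetric] power_add[symmetric])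
      have "p ^ b \<noteq> 0" using pr by (simp add: prime_gt_0_nat)
      then have "order G div q ^ b = p ^ (a - b) * m" using e \<open>p = q\<close> by simp
      then have "q dvd order G div card Q" using cb \<open>b < a\<close> \<open>p = q\<close> by (simp add: dvd_power)
      then show False using ndvdQ by simp
    qed
    then have "card Q = card P" using ba ca cb \<open>p = q\<close> by simp
    then have "Q = P" using card_subset_eq[OF finP QP] by simp
    then show False using PQ by simp
  qed
  define m where "m = order G div p ^ a"
  have nm: "order G = p ^ a * m" using dP m_def by simp
  have "\<not> p dvd m" using ndvdP ca m_def by simp
  then have copm: "coprime (p ^ a) m" using pr by (simp add: prime_imp_coprime)
  define R where "R = {y \<in> carrier G. y [^] m = \<one>}"
  have PR: "\<forall>x\<in>P. \<forall>y\<in>R. x \<otimes> y = y \<otimes> x"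
  proof (intro ballI)
    fix x y assume x: "x \<in> P" and y: "y \<in> R"
    have xa: "x [^] (p ^ a) = \<one>" using subgroup_pow_card[OF PS fin x] ca by simp
    show "x \<otimes> y = y \<otimes> x"
      using coprime_elements_commute[OF nil _ _ xa _ copm] x y Psub R_def by auto
  qed
  have dec: "\<forall>g\<in>carrier G. \<exists>x\<in>P. \<exists>y\<in>R. g = x \<otimes> y"
  proof
    fix g assume g: "g \<in> carrier G"
    have "gcd (int (p ^ a)) (int m) = 1" using copm by (metis coprime_iff_gcd_eq_1 gcd_int_int_eq of_nat_1)
    then obtain u v :: int where uv: "u * int (p ^ a) + v * int m = 1" using bezout_int by metis
    have gn: "g [^] (int (order G)) = \<one>" using pow_order_eq_1[OF g] int_pow_int by metis
    define x where "x = g [^] (v * int m)"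
    define y where "y = g [^] (u * int (p ^ a))"
    have "g = g [^] (1::int)" using g by simp
    also have "\<dots> = y \<otimes> x" unfolding x_def y_def using int_pow_mult[OF g] uv by metis
    finally have gyx: "g = y \<otimes> x" .
    have "x [^] (int (p ^ a)) = g [^] (v * int m * int (p ^ a))" unfolding x_def using int_pow_pow[OF g] by simp
    also have "\<dots> = (g [^] (int (order G))) [^] v" using int_pow_pow[OF g] nm by (simp add: ac_simps)
    also have "\<dots> = \<one>" using gn by simp
    finally have "x [^] (p ^ a) = \<one>" using int_pow_int by metis
    then have xP: "x \<in> P" using sylow_pelem[OF nil fin sP] g x_def by simp
    have "y [^] (int m) = g [^] (u * int (p ^ a) * int m)" unfolding y_def using int_pow_pow[OF g] by simp
    also have "\<dots> = (g [^] (int (order G))) [^] u" using int_pow_pow[OF g] nm by (simp add: ac_simps)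
    also have "\<dots> = \<one>" using gn by simp
    finally have "y [^] m = \<one>" using int_pow_int by metis
    then have yY: "y \<in> R" using R_def g y_def by simp
    have "g = x \<otimes> y" using gyx PR xP yY by metis
    then show "\<exists>x\<in>P. \<exists>y\<in>R. g = x \<otimes> y" using xP yY by blast
  qed
  have QR: "Q \<subseteq> R"
  proof
    fix h assume h: "h \<in> Q"
    have hq: "h [^] (q ^ b) = \<one>" using subgroup_pow_card[OF QS fin h] cb by simp
    have "coprime (q ^ b) (p ^ a)" using primes_coprime[OF qr pr] pq by (simp add: coprime_commute)
    then have "q ^ b dvd m" using dQ nm coprime_dvd_mult_right_iff by metis
    then obtain r where "m = q ^ b * r" by blast
    then have "h [^] m = (h [^] (q ^ b)) [^] r" using nat_pow_pow h Qsub by auto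
    then show "h \<in> R" using hq h Qsub R_def by auto
  qed
  have naR: "nonabelian_subset G R" using naQ QR unfolding nonabelian_subset_def by blast
  show ?thesis
    by (rule exI[of _ P], rule exI[of _ R]) (use Psub R_def PR dec naP naR in auto)
qed

end

definition cent :: "('a, 'b) monoid_scheme \<Rightarrow> 'a set \<Rightarrow> 'a set" where
  "cent G S = {g \<in> carrier G. \<forall>s\<in>S. g \<otimes>\<^bsub>G\<^esub> s = s \<otimes>\<^bsub>G\<^esub> g}"

context group begin
lemma cent_subgroup:
  assumes S: "S \<subseteq> carrier G" shows "subgroup (cent G S) G"
proof (rule subgroup.intro)
  show "cent G S \<subseteq> carrier G" unfolding cent_def by auto
  show "x \<otimes> y \<in> cent G S" if x: "x \<in> cent G S" and y: "y \<in> cent G S" for x y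
  proof -
    have xc: "x \<in> carrier G" and yc: "y \<in> carrier G" using x y unfolding cent_def by auto
    have "x \<otimes> y \<otimes> s = s \<otimes> (x \<otimes> y)" if s: "s \<in> S" for s
    proof -
      have sc: "s \<in> carrier G" using s S by auto
      have "x \<otimes> y \<otimes> s = x \<otimes> (y \<otimes> s)" using xc yc sc by (simp add: m_assoc)
      also have "\<dots> = x \<otimes> (s \<otimes> y)" using y s unfolding cent_def by auto
      also have "\<dots> = (x \<otimes> s) \<otimes> y" using xc yc sc by (simp add: m_assoc)
      also have "\<dots> = (s \<otimes> x) \<otimes> y" using x s unfolding cent_def by auto
      also have "\<dots> = s \<otimes> (x \<otimes> y)" using xc yc sc by (simp add: m_assoc)
      finally show ?thesis .
    qed
    then show ?thesis using xc yc unfolding cent_def by auto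
  qed
  show "\<one> \<in> cent G S" using S unfolding cent_def by auto
  show "inv x \<in> cent G S" if x: "x \<in> cent G S" for x
  proof -
    have xc: "x \<in> carrier G" using x unfolding cent_def by auto
    have "inv x \<otimes> s = s \<otimes> inv x" if s: "s \<in> S" for s
    proof -
      have sc: "s \<in> carrier G" using s S by auto
      have "x \<otimes> s = s \<otimes> x" using x s unfolding cent_def by auto
      then have "inv x \<otimes> (x \<otimes> s) \<otimes> inv x = inv x \<otimes> (s \<otimes> x) \<otimes> inv x" by simp
      then show ?thesis using xc sc by (simp add: m_assoc)
    qed
    then show "inv x \<in> cent G S" using xc unfolding cent_def by auto
  qed
qed

lemma center_sub_cent: "S \<subseteq> carrier G \<Longrightarrow> group_center G \<subseteq> cent G S"
  unfolding group_center_def cent_def by auto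

lemma cent_minus_center: "S \<subseteq> carrier G \<Longrightarrow> cent G (S - group_center G) = cent G S"
  unfolding group_center_def cent_def by auto

lemma cent_Un: "cent G (S \<union> T) = cent G S \<inter> cent G T"
  unfolding cent_def by auto

lemma cent_empty: "cent G {} = carrier G"
  unfolding cent_def by auto

lemma prod_bound:
  assumes U: "subgroup U G" and V: "subgroup V G" and fin: "finite (carrier G)"
  shows "card U * card V \<le> order G * card (U \<inter> V)"
proof -
  have Uc: "U \<subseteq> carrier G" and Vc: "V \<subseteq> carrier G" using U V subgroup.subset by auto
  define r where "r h = (SOME u. u \<in> U \<and> (\<exists>v\<in>V. u \<otimes> v = h))" for h
  have r: "r (u \<otimes> v) \<in> U \<and> (\<exists>v'\<in>V. r (u \<otimes> v) \<otimes> v' = u \<otimes> v)" if "u \<in> U" "v \<in> V" for u v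
    unfolding r_def by (rule someI_ex) (use that in blast)
  define \<phi> where "\<phi> p = (fst p \<otimes> snd p, inv (r (fst p \<otimes> snd p)) \<otimes> fst p)" for p
  have inj: "inj_on \<phi> (U \<times> V)"
  proof (rule inj_onI)
    fix p1 p2 assume p1: "p1 \<in> U \<times> V" and p2: "p2 \<in> U \<times> V" and eq: "\<phi> p1 = \<phi> p2"
    obtain u1 v1 where 1: "p1 = (u1, v1)" "u1 \<in> U" "v1 \<in> V" using p1 by auto
    obtain u2 v2 where 2: "p2 = (u2, v2)" "u2 \<in> U" "v2 \<in> V" using p2 by auto
    have e1: "u1 \<otimes> v1 = u2 \<otimes> v2" using eq 1 2 unfolding \<phi>_def by simp
    have "r (u1 \<otimes> v1) \<in> U" using r 1 by blast
    then have rc: "r (u1 \<otimes> v1) \<in> carrier G" using Uc by auto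
    have "inv (r (u1 \<otimes> v1)) \<otimes> u1 = inv (r (u1 \<otimes> v1)) \<otimes> u2" using eq 1 2 e1 unfolding \<phi>_def by simp
    then have uu: "u1 = u2" using rc 1 2 Uc by (metis inv_closed l_cancel subsetD)
    then have "v1 = v2" using e1 1 2 Uc Vc by (metis l_cancel subsetD)
    then show "p1 = p2" using uu 1 2 by simp
  qed
  have img: "\<phi> ` (U \<times> V) \<subseteq> carrier G \<times> (U \<inter> V)"
  proof
    fix q assume "q \<in> \<phi> ` (U \<times> V)"
    then obtain u v where uv: "u \<in> U" "v \<in> V" "q = \<phi> (u, v)" by auto
    obtain v' where v': "v' \<in> V" "r (u \<otimes> v) \<otimes> v' = u \<otimes> v" and rU: "r (u \<otimes> v) \<in> U" using r[OF uv(1,2)] by blast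
    have uc: "u \<in> carrier G" and vc: "v \<in> carrier G" and v'c: "v' \<in> carrier G" and rc: "r (u \<otimes> v) \<in> carrier G"
      using uv v' rU Uc Vc by auto
    have inU: "inv (r (u \<otimes> v)) \<otimes> u \<in> U" using rU uv U by (simp add: subgroup.m_closed subgroup.m_inv_closed)
    have "inv (r (u \<otimes> v)) \<otimes> u = v' \<otimes> inv v"
    proof -
      have "inv (r (u \<otimes> v)) \<otimes> u \<otimes> v = inv (r (u \<otimes> v)) \<otimes> (u \<otimes> v)" using uc vc rc by (simp add: m_assoc)
      also have "\<dots> = v'" using v' rc v'c by (metis cancel_l)
      finally have "inv (r (u \<otimes> v)) \<otimes> u \<otimes> v = v'" .
      then have "inv (r (u \<otimes> v)) \<otimes> u \<otimes> v \<otimes> inv v = v' \<otimes> inv v" by simp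
      then show ?thesis using uc vc rc by (simp add: m_assoc)
    qed
    then have inV: "inv (r (u \<otimes> v)) \<otimes> u \<in> V" using v' uv V by (simp add: subgroup.m_closed subgroup.m_inv_closed)
    show "q \<in> carrier G \<times> (U \<inter> V)" using uv inU inV uc vc unfolding \<phi>_def by simp
  qed
  have "card (U \<times> V) \<le> card (carrier G \<times> (U \<inter> V))"
    by (rule card_inj_on_le[OF inj img]) (use fin Uc finite_subset in blast)
  then show ?thesis by (simp add: card_cartesian_product order_def)
qed

lemma prod_lower:
  assumes U: "subgroup U G" and V: "subgroup V G" and fin: "finite (carrier G)"
    and dec: "\<forall>g\<in>carrier G. \<exists>u\<in>U. \<exists>v\<in>V. g = u \<otimes> v"
  shows "order G * card (U \<inter> V) \<le> card U * card V"
proof -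
  have Uc: "U \<subseteq> carrier G" and Vc: "V \<subseteq> carrier G" using U V subgroup.subset by auto
  define s where "s g = (SOME p. fst p \<in> U \<and> snd p \<in> V \<and> g = fst p \<otimes> snd p)" for g
  have s0: "fst (s g) \<in> U \<and> snd (s g) \<in> V \<and> g = fst (s g) \<otimes> snd (s g)" if "g \<in> carrier G" for g
  proof -
    have "\<exists>u\<in>U. \<exists>v\<in>V. g = u \<otimes> v" using dec that by (rule bspec)
    then obtain u v where uv: "u \<in> U" "v \<in> V" "g = u \<otimes> v" by (elim bexE)
    show ?thesis unfolding s_def by (rule someI[where x="(u, v)"]) (use uv in simp)
  qed
  have s: "fst (s g) \<in> U \<and> snd (s g) \<in> V \<and> fst (s g) \<otimes> snd (s g) = g" if "g \<in> carrier G" for g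
    using s0[OF that] by (elim conjE) (intro conjI; assumption?; rule sym; assumption)
  define \<psi> where "\<psi> q = (fst (s (fst q)) \<otimes> snd q, inv (snd q) \<otimes> snd (s (fst q)))" for q
  have inj: "inj_on \<psi> (carrier G \<times> (U \<inter> V))"
  proof (rule inj_onI)
    fix q1 q2 assume q1: "q1 \<in> carrier G \<times> (U \<inter> V)" and q2: "q2 \<in> carrier G \<times> (U \<inter> V)" and eq: "\<psi> q1 = \<psi> q2"
    obtain g1 w1 where 1: "q1 = (g1, w1)" "g1 \<in> carrier G" "w1 \<in> U" "w1 \<in> V" using q1 by auto
    obtain g2 w2 where 2: "q2 = (g2, w2)" "g2 \<in> carrier G" "w2 \<in> U" "w2 \<in> V" using q2 by auto
    have w1c: "w1 \<in> carrier G" and w2c: "w2 \<in> carrier G" using 1 2 Uc by auto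
    have s1: "fst (s g1) \<in> carrier G" "snd (s g1) \<in> carrier G" "fst (s g1) \<otimes> snd (s g1) = g1"
      using s[OF 1(2)] Uc Vc by auto
    have s2: "fst (s g2) \<in> carrier G" "snd (s g2) \<in> carrier G" "fst (s g2) \<otimes> snd (s g2) = g2"
      using s[OF 2(2)] Uc Vc by auto
    have e1: "fst (s g1) \<otimes> w1 = fst (s g2) \<otimes> w2" and e2: "inv w1 \<otimes> snd (s g1) = inv w2 \<otimes> snd (s g2)"
      using eq 1 2 unfolding \<psi>_def by auto
    have "(fst (s g1) \<otimes> w1) \<otimes> (inv w1 \<otimes> snd (s g1)) = (fst (s g2) \<otimes> w2) \<otimes> (inv w2 \<otimes> snd (s g2))"
      using e1 e2 by simp
    moreover have "(fst (s g1) \<otimes> w1) \<otimes> (inv w1 \<otimes> snd (s g1)) = fst (s g1) \<otimes> snd (s g1)"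
      using s1(1,2) w1c by (simp add: m_assoc)
    moreover have "(fst (s g2) \<otimes> w2) \<otimes> (inv w2 \<otimes> snd (s g2)) = fst (s g2) \<otimes> snd (s g2)"
      using s2(1,2) w2c by (simp add: m_assoc)
    ultimately have gg: "g1 = g2" using s1(3) s2(3) by simp
    then have "fst (s g1) \<otimes> w1 = fst (s g1) \<otimes> w2" using e1 by simp
    then have "w1 = w2" using s1(1) w1c w2c by simp
    then show "q1 = q2" using gg 1 2 by simp
  qed
  have img: "\<psi> ` (carrier G \<times> (U \<inter> V)) \<subseteq> U \<times> V"
  proof
    fix q assume "q \<in> \<psi> ` (carrier G \<times> (U \<inter> V))"
    then obtain g w where gw: "g \<in> carrier G" "w \<in> U" "w \<in> V" "q = \<psi> (g, w)" by auto
    have sU: "fst (s g) \<in> U" and sV: "snd (s g) \<in> V" using s[OF gw(1)] by auto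
    have "fst (s g) \<otimes> w \<in> U" using subgroup.m_closed[OF U sU gw(2)] .
    moreover have "inv w \<otimes> snd (s g) \<in> V" using subgroup.m_closed[OF V subgroup.m_inv_closed[OF V gw(3)] sV] .
    ultimately show "q \<in> U \<times> V" using gw unfolding \<psi>_def by simp
  qed
  have "card (carrier G \<times> (U \<inter> V)) \<le> card (U \<times> V)"
    by (rule card_inj_on_le[OF inj img]) (use fin Uc Vc finite_subset in blast)
  then show ?thesis by (simp add: card_cartesian_product order_def)
qed

lemma proper_half:
  assumes K: "subgroup K G" and ne: "K \<noteq> carrier G" and fin: "finite (carrier G)"
  shows "2 * card K \<le> order G"
proof -
  have l: "card (rcosets K) * card K = order G" using lagrange[OF K] .
  have Kc: "K \<subseteq> carrier G" using K subgroup.subset by auto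
  have "card K \<noteq> order G" using card_subset_eq[OF fin Kc] ne unfolding order_def by auto
  then have "card (rcosets K) \<noteq> 1" using l by auto
  moreover have "card (rcosets K) \<noteq> 0" using l fin one_closed unfolding order_def
    by (metis card_0_eq empty_iff mult_0 subgroup.one_closed[OF K] finite_subset[OF Kc fin] card_gt_0_iff gr_implies_not0)
  ultimately have "2 \<le> card (rcosets K)" by simp
  then show ?thesis using l by (metis mult_le_mono1)
qed

end

lemma transfer:
  fixes G :: "('a, 'b) monoid_scheme" and H :: "('c, 'd) monoid_scheme"
  assumes gG: "group G" and gH: "group H" and finG: "finite (carrier G)" and finH: "finite (carrier H)"
    and bij: "bij_betw f (carrier G - group_center G) (carrier H - group_center H)"
    and adj: "\<forall>x \<in> carrier G - group_center G. \<forall>y \<in> carrier G - group_center G.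
          (x \<otimes>\<^bsub>G\<^esub> y \<noteq> y \<otimes>\<^bsub>G\<^esub> x) \<longleftrightarrow> (f x \<otimes>\<^bsub>H\<^esub> f y \<noteq> f y \<otimes>\<^bsub>H\<^esub> f x)"
    and S: "S \<subseteq> carrier G - group_center G"
  shows "int (card (cent G S)) - int (card (group_center G))
       = int (card (cent H (f ` S))) - int (card (group_center H))"
proof -
  let ?VG = "carrier G - group_center G" and ?VH = "carrier H - group_center H"
  have fV: "f ` ?VG = ?VH" using bij unfolding bij_betw_def by simp
  have fS: "f ` S \<subseteq> ?VH" using image_mono[OF S, of f] fV by simp
  have adj': "x \<otimes>\<^bsub>G\<^esub> y = y \<otimes>\<^bsub>G\<^esub> x \<longleftrightarrow> f x \<otimes>\<^bsub>H\<^esub> f y = f y \<otimes>\<^bsub>H\<^esub> f x"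
    if "x \<in> ?VG" "y \<in> ?VG" for x y using bspec[OF bspec[OF adj that(1)] that(2)] by simp
  have eq: "f ` (cent G S - group_center G) = cent H (f ` S) - group_center H"
  proof
    show "f ` (cent G S - group_center G) \<subseteq> cent H (f ` S) - group_center H"
    proof
      fix z assume "z \<in> f ` (cent G S - group_center G)"
      then obtain x where x: "x \<in> cent G S" "x \<notin> group_center G" "z = f x" by auto
      have xV: "x \<in> ?VG" using x unfolding cent_def by auto
      have fxV: "f x \<in> ?VH" using bij_betw_apply[OF bij xV] .
      have "\<forall>t\<in>f ` S. f x \<otimes>\<^bsub>H\<^esub> t = t \<otimes>\<^bsub>H\<^esub> f x"
      proof
        fix t assume "t \<in> f ` S"
        then obtain s where s: "s \<in> S" "t = f s" by auto
        have e: "x \<otimes>\<^bsub>G\<^esub> s = s \<otimes>\<^bsub>G\<^esub> x" using x(1) s(1) unfolding cent_def by blast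
        have sV: "s \<in> ?VG" using s S by blast
        have "f x \<otimes>\<^bsub>H\<^esub> f s = f s \<otimes>\<^bsub>H\<^esub> f x" using iffD1[OF adj'[OF xV sV] e] .
        then show "f x \<otimes>\<^bsub>H\<^esub> t = t \<otimes>\<^bsub>H\<^esub> f x" unfolding s(2) .
      qed
      then show "z \<in> cent H (f ` S) - group_center H" using fxV x unfolding cent_def by auto
    qed
  next
    show "cent H (f ` S) - group_center H \<subseteq> f ` (cent G S - group_center G)"
    proof
      fix z assume z: "z \<in> cent H (f ` S) - group_center H"
      then have "z \<in> ?VH" unfolding cent_def by auto
      then have "z \<in> f ` ?VG" using fV by simp
      then obtain x where x: "x \<in> ?VG" "z = f x" by (elim imageE) simp
      have "x \<otimes>\<^bsub>G\<^esub> s = s \<otimes>\<^bsub>G\<^esub> x" if s: "s \<in> S" for s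
      proof -
        have "f s \<in> f ` S" using s by blast
        then have "z \<otimes>\<^bsub>H\<^esub> f s = f s \<otimes>\<^bsub>H\<^esub> z" using z unfolding cent_def by blast
        then have e: "f x \<otimes>\<^bsub>H\<^esub> f s = f s \<otimes>\<^bsub>H\<^esub> f x" unfolding x(2) .
        have sV: "s \<in> ?VG" using s S by blast
        show ?thesis using iffD2[OF adj'[OF x(1) sV] e] .
      qed
      then have "x \<in> cent G S - group_center G" using x unfolding cent_def by auto
      then show "z \<in> f ` (cent G S - group_center G)" using x by auto
    qed
  qed
  have inj: "inj_on f (cent G S - group_center G)"
  proof (rule inj_on_subset[OF bij_betw_imp_inj_on[OF bij]])
    show "cent G S - group_center G \<subseteq> ?VG" unfolding cent_def by auto
  qed
  have c1: "card (cent G S - group_center G) = card (cent H (f ` S) - group_center H)"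
    using card_image[OF inj] eq by simp
  have SG: "S \<subseteq> carrier G" using S by auto
  have SH: "f ` S \<subseteq> carrier H" using fS by auto
  have zG: "group_center G \<subseteq> cent G S" using group.center_sub_cent[OF gG SG] .
  have zH: "group_center H \<subseteq> cent H (f ` S)" using group.center_sub_cent[OF gH SH] .
  have fcG: "finite (cent G S)" using finG unfolding cent_def by auto
  have fcH: "finite (cent H (f ` S))" using finH unfolding cent_def by auto
  have "card (cent G S - group_center G) = card (cent G S) - card (group_center G)"
    using card_Diff_subset[OF finite_subset[OF zG fcG] zG] .
  moreover have "card (cent H (f ` S) - group_center H) = card (cent H (f ` S)) - card (group_center H)"
    using card_Diff_subset[OF finite_subset[OF zH fcH] zH] .
  moreover have "card (group_center G) \<le> card (cent G S)" using card_mono[OF fcG zG] .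
  moreover have "card (group_center H) \<le> card (cent H (f ` S))" using card_mono[OF fcH zH] .
  ultimately show ?thesis using c1 by linarith
qed

lemma iso_sym:
  assumes "noncomm_graph_iso G H" shows "noncomm_graph_iso H G"
proof -
  obtain f where bij: "bij_betw f (carrier G - group_center G) (carrier H - group_center H)"
    and adj: "\<forall>x \<in> carrier G - group_center G. \<forall>y \<in> carrier G - group_center G.
          (x \<otimes>\<^bsub>G\<^esub> y \<noteq> y \<otimes>\<^bsub>G\<^esub> x) \<longleftrightarrow> (f x \<otimes>\<^bsub>H\<^esub> f y \<noteq> f y \<otimes>\<^bsub>H\<^esub> f x)"
    using assms unfolding noncomm_graph_iso_def by (elim exE conjE)
  define g where "g = the_inv_into (carrier G - group_center G) f"
  have bg: "bij_betw g (carrier H - group_center H) (carrier G - group_center G)"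
    unfolding g_def using bij by (rule bij_betw_the_inv_into)
  have fg: "f (g y) = y" if "y \<in> carrier H - group_center H" for y
    unfolding g_def using f_the_inv_into_f_bij_betw[OF bij that] .
  have "\<forall>x \<in> carrier H - group_center H. \<forall>y \<in> carrier H - group_center H.
          (x \<otimes>\<^bsub>H\<^esub> y \<noteq> y \<otimes>\<^bsub>H\<^esub> x) \<longleftrightarrow> (g x \<otimes>\<^bsub>G\<^esub> g y \<noteq> g y \<otimes>\<^bsub>G\<^esub> g x)"
  proof (intro ballI)
    fix x y assume x: "x \<in> carrier H - group_center H" and y: "y \<in> carrier H - group_center H"
    have gx: "g x \<in> carrier G - group_center G" and gy: "g y \<in> carrier G - group_center G"
      using bij_betw_apply[OF bg x] bij_betw_apply[OF bg y] by auto
    show "(x \<otimes>\<^bsub>H\<^esub> y \<noteq> y \<otimes>\<^bsub>H\<^esub> x) \<longleftrightarrow> (g x \<otimes>\<^bsub>G\<^esub> g y \<noteq> g y \<otimes>\<^bsub>G\<^esub> g x)"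
    proof -
      have "(g x \<otimes>\<^bsub>G\<^esub> g y \<noteq> g y \<otimes>\<^bsub>G\<^esub> g x) \<longleftrightarrow> (f (g x) \<otimes>\<^bsub>H\<^esub> f (g y) \<noteq> f (g y) \<otimes>\<^bsub>H\<^esub> f (g x))"
        using bspec[OF bspec[OF adj gx] gy] .
      then have "(g x \<otimes>\<^bsub>G\<^esub> g y \<noteq> g y \<otimes>\<^bsub>G\<^esub> g x) \<longleftrightarrow> (x \<otimes>\<^bsub>H\<^esub> y \<noteq> y \<otimes>\<^bsub>H\<^esub> x)"
        by (simp only: fg[OF x] fg[OF y])
      then show ?thesis by (rule sym)
    qed
  qed
  then show ?thesis unfolding noncomm_graph_iso_def using bg by (intro exI[of _ g] conjI)
qed


lemma one_side:
  fixes G :: "('a, 'b) monoid_scheme" and H :: "('c, 'd) monoid_scheme"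
  assumes gG: "group G" and gH: "group H" and finG: "finite (carrier G)" and finH: "finite (carrier H)"
    and AG: "A \<subseteq> carrier G" and BG: "B \<subseteq> carrier G"
    and comm: "\<forall>x\<in>A. \<forall>y\<in>B. x \<otimes>\<^bsub>G\<^esub> y = y \<otimes>\<^bsub>G\<^esub> x"
    and dec: "\<forall>g\<in>carrier G. \<exists>x\<in>A. \<exists>y\<in>B. g = x \<otimes>\<^bsub>G\<^esub> y"
    and naA: "nonabelian_subset G A" and naB: "nonabelian_subset G B"
    and iso: "noncomm_graph_iso G H"
  shows "card (group_center G) \<le> card (group_center H)"
proof -
  obtain f where bij: "bij_betw f (carrier G - group_center G) (carrier H - group_center H)"
    and adj: "\<forall>x \<in> carrier G - group_center G. \<forall>y \<in> carrier G - group_center G.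
          (x \<otimes>\<^bsub>G\<^esub> y \<noteq> y \<otimes>\<^bsub>G\<^esub> x) \<longleftrightarrow> (f x \<otimes>\<^bsub>H\<^esub> f y \<noteq> f y \<otimes>\<^bsub>H\<^esub> f x)"
    using iso unfolding noncomm_graph_iso_def by (elim exE conjE)
  let ?ZG = "group_center G" and ?ZH = "group_center H"
  define S1 where "S1 = A - ?ZG"
  define S2 where "S2 = B - ?ZG"
  have S1V: "S1 \<subseteq> carrier G - ?ZG" and S2V: "S2 \<subseteq> carrier G - ?ZG" using AG BG S1_def S2_def by auto
  have S12V: "S1 \<union> S2 \<subseteq> carrier G - ?ZG" using S1V S2V by blast
  have fV: "f ` (carrier G - ?ZG) = carrier H - ?ZH" using bij unfolding bij_betw_def by simp
  have fS1: "f ` S1 \<subseteq> carrier H" using image_mono[OF S1V, of f] fV by auto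
  have fS2: "f ` S2 \<subseteq> carrier H" using image_mono[OF S2V, of f] fV by auto
  define U0 where "U0 = cent G A"
  define V0 where "V0 = cent G B"
  have U0S: "cent G S1 = U0" unfolding U0_def S1_def using group.cent_minus_center[OF gG AG] .
  have V0S: "cent G S2 = V0" unfolding V0_def S2_def using group.cent_minus_center[OF gG BG] .
  have U0sub: "subgroup U0 G" unfolding U0_def using group.cent_subgroup[OF gG AG] .
  have V0sub: "subgroup V0 G" unfolding V0_def using group.cent_subgroup[OF gG BG] .
  have int0: "U0 \<inter> V0 = ?ZG"
  proof
    show "U0 \<inter> V0 \<subseteq> ?ZG"
    proof
      fix z assume z: "z \<in> U0 \<inter> V0"
      have zc: "z \<in> carrier G" using z unfolding U0_def cent_def by auto
      have "z \<otimes>\<^bsub>G\<^esub> h = h \<otimes>\<^bsub>G\<^esub> z" if h: "h \<in> carrier G" for h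
      proof -
        obtain x y where xy: "x \<in> A" "y \<in> B" "h = x \<otimes>\<^bsub>G\<^esub> y" using dec h by blast
        have xc: "x \<in> carrier G" and yc: "y \<in> carrier G" using xy AG BG by auto
        have zx: "z \<otimes>\<^bsub>G\<^esub> x = x \<otimes>\<^bsub>G\<^esub> z" using z xy unfolding U0_def cent_def by auto
        have zy: "z \<otimes>\<^bsub>G\<^esub> y = y \<otimes>\<^bsub>G\<^esub> z" using z xy unfolding V0_def cent_def by auto
        have "z \<otimes>\<^bsub>G\<^esub> (x \<otimes>\<^bsub>G\<^esub> y) = (z \<otimes>\<^bsub>G\<^esub> x) \<otimes>\<^bsub>G\<^esub> y" using zc xc yc by (simp add: group.is_monoid[OF gG] monoid.m_assoc)
        also have "\<dots> = x \<otimes>\<^bsub>G\<^esub> (z \<otimes>\<^bsub>G\<^esub> y)" using zc xc yc zx by (simp add: group.is_monoid[OF gG] monoid.m_assoc)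
        also have "\<dots> = (x \<otimes>\<^bsub>G\<^esub> y) \<otimes>\<^bsub>G\<^esub> z" using zc xc yc zy by (simp add: group.is_monoid[OF gG] monoid.m_assoc)
        finally show ?thesis using xy(3) by simp
      qed
      then show "z \<in> ?ZG" unfolding group_center_def using zc by blast
    qed
    show "?ZG \<subseteq> U0 \<inter> V0" unfolding U0_def V0_def
      using group.center_sub_cent[OF gG AG] group.center_sub_cent[OF gG BG] by blast
  qed
  have decUV: "\<forall>g\<in>carrier G. \<exists>u\<in>U0. \<exists>v\<in>V0. g = u \<otimes>\<^bsub>G\<^esub> v"
  proof
    fix g assume g: "g \<in> carrier G"
    obtain x y where xy: "x \<in> A" "y \<in> B" "g = x \<otimes>\<^bsub>G\<^esub> y" using dec g by blast
    have xc: "x \<in> carrier G" and yc: "y \<in> carrier G" using xy AG BG by auto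
    have yU: "y \<in> U0" unfolding U0_def cent_def using yc comm xy(2) by (auto simp: eq_commute)
    have xV: "x \<in> V0" unfolding V0_def cent_def using xc comm xy(1) by auto
    have "x \<otimes>\<^bsub>G\<^esub> y = y \<otimes>\<^bsub>G\<^esub> x" using bspec[OF bspec[OF comm xy(1)] xy(2)] .
    then have "g = y \<otimes>\<^bsub>G\<^esub> x" using xy(3) by simp
    then show "\<exists>u\<in>U0. \<exists>v\<in>V0. g = u \<otimes>\<^bsub>G\<^esub> v" using yU xV by blast
  qed
  have low: "order G * card ?ZG \<le> card U0 * card V0"
    using group.prod_lower[OF gG U0sub V0sub finG decUV] int0 by simp
  obtain a1 a2 where a: "a1 \<in> A" "a2 \<in> A" "a1 \<otimes>\<^bsub>G\<^esub> a2 \<noteq> a2 \<otimes>\<^bsub>G\<^esub> a1"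
    using naA unfolding nonabelian_subset_def by blast
  have "a1 \<notin> U0" using a unfolding U0_def cent_def by auto
  then have "U0 \<noteq> carrier G" using a AG by auto
  then have hU: "2 * card U0 \<le> order G" using group.proper_half[OF gG U0sub _ finG] by simp
  obtain b1 b2 where b: "b1 \<in> B" "b2 \<in> B" "b1 \<otimes>\<^bsub>G\<^esub> b2 \<noteq> b2 \<otimes>\<^bsub>G\<^esub> b1"
    using naB unfolding nonabelian_subset_def by blast
  have "b1 \<notin> V0" using b unfolding V0_def cent_def by auto
  then have "V0 \<noteq> carrier G" using b BG by auto
  then have hV: "2 * card V0 \<le> order G" using group.proper_half[OF gG V0sub _ finG] by simp
  define U where "U = cent H (f ` S1)"
  define V where "V = cent H (f ` S2)"
  have Usub: "subgroup U H" unfolding U_def using group.cent_subgroup[OF gH fS1] .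
  have Vsub: "subgroup V H" unfolding V_def using group.cent_subgroup[OF gH fS2] .
  have up: "card U * card V \<le> order H * card (U \<inter> V)" using group.prod_bound[OF gH Usub Vsub finH] .
  have UV: "U \<inter> V = cent H (f ` (S1 \<union> S2))" unfolding U_def V_def image_Un using group.cent_Un[OF gH] by simp
  have t1: "int (card U0) - int (card ?ZG) = int (card U) - int (card ?ZH)"
    using transfer[OF gG gH finG finH bij adj S1V] U0S U_def by simp
  have t2: "int (card V0) - int (card ?ZG) = int (card V) - int (card ?ZH)"
    using transfer[OF gG gH finG finH bij adj S2V] V0S V_def by simp
  have "cent G (S1 \<union> S2) = ?ZG" using group.cent_Un[OF gG] U0S V0S int0 by simp
  then have t3: "int (card ?ZG) - int (card ?ZG) = int (card (U \<inter> V)) - int (card ?ZH)"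
    using transfer[OF gG gH finG finH bij adj S12V] UV by simp
  have t4: "int (order G) - int (card ?ZG) = int (order H) - int (card ?ZH)"
    using transfer[OF gG gH finG finH bij adj, of "{}"] group.cent_empty[OF gG] group.cent_empty[OF gH]
    unfolding order_def by simp
  have z1: "card ?ZG \<ge> 1"
  proof -
    have "\<one>\<^bsub>G\<^esub> \<in> ?ZG" unfolding group_center_def using gG by (simp add: group.is_monoid monoid.l_one monoid.r_one)
    moreover have "finite ?ZG" using finG unfolding group_center_def by auto
    ultimately show ?thesis by (metis One_nat_def Suc_leI card_gt_0_iff empty_iff)
  qed
  define t where "t = int (card ?ZH) - int (card ?ZG)"
  define n where "n = int (order G)"
  define z where "z = int (card ?ZG)"
  define a' where "a' = int (card U0)"
  define b' where "b' = int (card V0)"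
  have eU: "int (card U) = a' + t" using t1 t_def a'_def by simp
  have eV: "int (card V) = b' + t" using t2 t_def b'_def by simp
  have eI: "int (card (U \<inter> V)) = z + t" using t3 t_def z_def by simp
  have eH: "int (order H) = n + t" using t4 t_def n_def by simp
  have up': "(a' + t) * (b' + t) \<le> (n + t) * (z + t)"
    using up eU eV eI eH by (metis of_nat_le_iff of_nat_mult)
  have low': "n * z \<le> a' * b'" using low n_def z_def a'_def b'_def by (metis of_nat_le_iff of_nat_mult)
  have hU': "2 * a' \<le> n" and hV': "2 * b' \<le> n" using hU hV a'_def b'_def n_def by linarith+
  have z1': "z \<ge> 1" using z1 z_def by simp
  have "t \<ge> 0"
  proof (rule ccontr)
    assume "\<not> t \<ge> 0"
    then have tn: "t < 0" by simp
    have "a' + b' - n - z < 0" using hU' hV' z1' by linarith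
    then have pos: "t * (a' + b' - n - z) > 0" using tn by (simp add: mult_neg_neg)
    have "(a' + t) * (b' + t) - (n + t) * (z + t) = (a' * b' - n * z) + t * (a' + b' - n - z)"
      by (simp add: algebra_simps)
    then have "(a' + t) * (b' + t) - (n + t) * (z + t) > 0" using pos low' by linarith
    then show False using up' by linarith
  qed
  then show ?thesis using t_def by simp
qed

theorem corollary2p5:
  fixes G :: "('a, 'b) monoid_scheme" and H :: "('c, 'd) monoid_scheme"
  assumes "group G" and "finite (carrier G)" and "nilpotent_group G"
    and "group H" and "finite (carrier H)" and "nilpotent_group H"
    and "two_nonabelian_sylows G" and "two_nonabelian_sylows H"
    and "noncomm_graph_iso G H"
  shows "order G = order H"
proof -
  obtain NG where nG: "lower_central G NG = {\<one>\<^bsub>G\<^esub>}" using assms(3) unfolding nilpotent_group_def by blast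
  obtain NH where nH: "lower_central H NH = {\<one>\<^bsub>H\<^esub>}" using assms(6) unfolding nilpotent_group_def by blast
  obtain A B where AB: "A \<subseteq> carrier G" "B \<subseteq> carrier G" "\<forall>x\<in>A. \<forall>y\<in>B. x \<otimes>\<^bsub>G\<^esub> y = y \<otimes>\<^bsub>G\<^esub> x"
      "\<forall>g\<in>carrier G. \<exists>x\<in>A. \<exists>y\<in>B. g = x \<otimes>\<^bsub>G\<^esub> y" "nonabelian_subset G A" "nonabelian_subset G B"
    using group.decomposition[OF assms(1) nG assms(2) assms(7)] by blast
  obtain C D where CD: "C \<subseteq> carrier H" "D \<subseteq> carrier H" "\<forall>x\<in>C. \<forall>y\<in>D. x \<otimes>\<^bsub>H\<^esub> y = y \<otimes>\<^bsub>H\<^esub> x"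
      "\<forall>g\<in>carrier H. \<exists>x\<in>C. \<exists>y\<in>D. g = x \<otimes>\<^bsub>H\<^esub> y" "nonabelian_subset H C" "nonabelian_subset H D"
    using group.decomposition[OF assms(4) nH assms(5) assms(8)] by blast
  have le1: "card (group_center G) \<le> card (group_center H)"
    using one_side[OF assms(1) assms(4) assms(2) assms(5) AB assms(9)] .
  have le2: "card (group_center H) \<le> card (group_center G)"
    using one_side[OF assms(4) assms(1) assms(5) assms(2) CD iso_sym[OF assms(9)]] .
  obtain f where bij: "bij_betw f (carrier G - group_center G) (carrier H - group_center H)"
    and adj: "\<forall>x \<in> carrier G - group_center G. \<forall>y \<in> carrier G - group_center G.
          (x \<otimes>\<^bsub>G\<^esub> y \<noteq> y \<otimes>\<^bsub>G\<^esub> x) \<longleftrightarrow> (f x \<otimes>\<^bsub>H\<^esub> f y \<noteq> f y \<otimes>\<^bsub>H\<^esub> f x)"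
    using assms(9) unfolding noncomm_graph_iso_def by (elim exE conjE)
  have t4: "int (order G) - int (card (group_center G)) = int (order H) - int (card (group_center H))"
    using transfer[OF assms(1) assms(4) assms(2) assms(5) bij adj, of "{}"]
      group.cent_empty[OF assms(1)] group.cent_empty[OF assms(4)]
    unfolding order_def by simp
  then show ?thesis using le1 le2 by linarith
qed

end
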